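(* Let $Z_1,\ldots,Z_n$ be i.i.d. from a distribution $\mathcal{D}$ on a set $\mathbb{Z}$, let $\ell:\Theta\times\mathbb{Z}\to[0,\infty)$ be a loss function with risk $R(\theta)=\mathbb{E}_{Z\sim\mathcal{D}}\{\ell(\theta;Z)\}$ and risk minimizer $\theta^*=\arg\min_{\theta\in\Theta}R(\theta)$. Suppose the strong central condition holds with learning rate $\bar\omega>0$. Let the sample $S=(Z_1,\ldots,Z_n)$ be partitioned as $S=S_1\sqcup S_2$ into two sub-samples of sizes $n_1$ and $n_2$, let $\widehat\theta_{S_1}$ be any AERM computed on $S_1$, and for $\omega\ge0$ define the offline GUe-value $$G_{n,\mathrm{off}}(\theta)=\exp\bigl[-\omega\, n_2\{\widehat R_{S_2}(\widehat\theta_{S_1})-\widehat R_{S_2}(\theta)\}\bigr],$$ where $\widehat R_{S_2}(\theta)=n_2^{-1}\sum_{Z\in S_2}\ell(\theta;Z)$. If $\omega\in[0,\bar\omega)$, then $G_{n,\mathrm{off}}(\theta^* )$ is an e-value, i.e. $\mathbb{E}\{G_{n,\mathrm{off}}(\theta^* )\}\le 1$.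
   Context: For a finite sub-sample $T$ of size $m$, $\widehat R_T(\theta)=m^{-1}\sum_{Z\in T}\ell(\theta;Z)$. For fixed constants $\varepsilon,\delta\ge0$, an $(\varepsilon,\delta)$-AERM on $T$ is an estimator $\widehat\theta_T$ (a measurable function of $T$) with $\widehat R_T(\widehat\theta_T)\le\inf_{\theta\in\Theta}\widehat R_T(\theta)+\delta/m^{1+\varepsilon}$; an AERM is an $(\varepsilon,\delta)$-AERM for some such constants. Strong central condition with learning rate $\bar\omega>0$: $\mathbb{E}_{Z\sim\mathcal{D}}\exp[-\omega\{\ell(\theta;Z)-\ell(\theta^*;Z)\}]\le1$ for all $\theta\in\Theta$ and all $\omega\in[0,\bar\omega)$. An e-value is a non-negative random variable with expectation at most 1. *)

theory Defs
  imports "HOL-Probability.Probability"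
begin

definition emp_risk :: "('t \<Rightarrow> 'z \<Rightarrow> real) \<Rightarrow> nat set \<Rightarrow> (nat \<Rightarrow> 'z) \<Rightarrow> 't \<Rightarrow> real" where
  "emp_risk l T s th = (\<Sum>i\<in>T. l th (s i)) / real (card T)"

definition risk :: "'z measure \<Rightarrow> ('t \<Rightarrow> 'z \<Rightarrow> real) \<Rightarrow> 't \<Rightarrow> real" where
  "risk D l th = (\<integral>z. l th z \<partial>D)"

definition aerm :: "'z measure \<Rightarrow> 't measure \<Rightarrow> ('t \<Rightarrow> 'z \<Rightarrow> real) \<Rightarrow> nat set
    \<Rightarrow> ((nat \<Rightarrow> 'z) \<Rightarrow> 't) \<Rightarrow> bool" where
  "aerm D Th l T est \<longleftrightarrow>
     est \<in> measurable (PiM T (\<lambda>_. D)) Th \<and>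
     (\<exists>eps delta. eps \<ge> 0 \<and> delta \<ge> 0 \<and>
        (\<forall>s\<in>space (PiM T (\<lambda>_. D)).
           emp_risk l T s (est s) \<le> (INF th\<in>space Th. emp_risk l T s th)
              + delta / (real (card T) powr (1 + eps))))"

definition strong_central :: "'z measure \<Rightarrow> 't measure \<Rightarrow> ('t \<Rightarrow> 'z \<Rightarrow> real) \<Rightarrow> 't \<Rightarrow> real \<Rightarrow> bool" where
  "strong_central D Th l thstar wbar \<longleftrightarrow>
     (\<forall>th\<in>space Th. \<forall>w. 0 \<le> w \<and> w < wbar \<longrightarrow>
        (\<integral>\<^sup>+ z. ennreal (exp (- w * (l th z - l thstar z))) \<partial>D) \<le> 1)"

definition e_value :: "'a measure \<Rightarrow> ('a \<Rightarrow> real) \<Rightarrow> bool" where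
  "e_value M X \<longleftrightarrow> X \<in> borel_measurable M \<and> (\<forall>x\<in>space M. X x \<ge> 0) \<and>
     (\<integral>\<^sup>+ x. ennreal (X x) \<partial>M) \<le> 1"

end

theory Submission
  imports Defs
begin

theorem lemma2:
  fixes D :: "'z measure" and Th :: "'t measure" and l :: "'t \<Rightarrow> 'z \<Rightarrow> real"
    and thstar :: 't and wbar w :: real and n :: nat and I1 I2 :: "nat set"
    and est :: "(nat \<Rightarrow> 'z) \<Rightarrow> 't"
  assumes D: "prob_space D"
    and l_meas: "(\<lambda>(th, z). l th z) \<in> borel_measurable (Th \<Otimes>\<^sub>M D)"
    and l_nonneg: "\<And>th z. th \<in> space Th \<Longrightarrow> z \<in> space D \<Longrightarrow> l th z \<ge> 0"
    and l_int: "\<And>th. th \<in> space Th \<Longrightarrow> integrable D (l th)"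
    and thstar: "thstar \<in> space Th"
    and argmin: "\<And>th. th \<in> space Th \<Longrightarrow> risk D l thstar \<le> risk D l th"
    and wbar: "wbar > 0"
    and central: "strong_central D Th l thstar wbar"
    and I1: "I1 \<subseteq> {..<n}"
    and I2: "I2 = {..<n} - I1"
    and est: "aerm D Th l I1 est"
    and w: "0 \<le> w" "w < wbar"
  shows "e_value (PiM {..<n} (\<lambda>_. D))
           (\<lambda>s. exp (- w * (real (card I2) *
              (emp_risk l I2 s (est (restrict s I1)) - emp_risk l I2 s thstar))))"
proof -
  interpret D: prob_space D by (rule D)
  interpret P: product_prob_space "\<lambda>_. D" UNIV by unfold_locales
  have fin2: "finite I2" using I2 by simp
  have fin1: "finite I1" using I1 finite_subset by blast
  have disj: "I1 \<inter> I2 = {}" and un: "I1 \<union> I2 = {..<n}" using I1 I2 by auto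
  have estm[measurable]: "est \<in> measurable (PiM I1 (\<lambda>_. D)) Th" using est by (simp add: aerm_def)
  have lm[measurable]: "(\<lambda>x. l (fst x) (snd x)) \<in> borel_measurable (Th \<Otimes>\<^sub>M D)"
    using l_meas by (simp add: case_prod_beta')
  define h where "h s = (\<Prod>i\<in>I2. exp (- w * (l (est (restrict s I1)) (s i) - l thstar (s i))))" for s :: "nat \<Rightarrow> 'z"
  have eq: "exp (- w * (real (card I2) *
              (emp_risk l I2 s (est (restrict s I1)) - emp_risk l I2 s thstar))) = h s" for s
  proof (cases "card I2 = 0")
    case True
    then have "I2 = {}" using fin2 by simp
    then show ?thesis by (simp add: h_def)
  next
    case False
    have "real (card I2) * (emp_risk l I2 s (est (restrict s I1)) - emp_risk l I2 s thstar)
       = (\<Sum>i\<in>I2. l (est (restrict s I1)) (s i) - l thstar (s i))"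
      using False by (simp add: emp_risk_def field_simps sum_subtractf)
    then have "- w * (real (card I2) * (emp_risk l I2 s (est (restrict s I1)) - emp_risk l I2 s thstar))
       = (\<Sum>i\<in>I2. - w * (l (est (restrict s I1)) (s i) - l thstar (s i)))"
      by (simp add: sum_distrib_left)
    then show ?thesis by (simp add: h_def exp_sum fin2)
  qed
  have rm: "(\<lambda>s. restrict s I1) \<in> measurable (PiM {..<n} (\<lambda>_. D)) (PiM I1 (\<lambda>_. D))"
    using I1 by (rule measurable_restrict_subset)
  have term_m: "(\<lambda>s. l (est (restrict s I1)) (s i)) \<in> borel_measurable (PiM {..<n} (\<lambda>_. D))"
    if "i \<in> I2" for i
  proof -
    have "(\<lambda>s. (est (restrict s I1), s i)) \<in> measurable (PiM {..<n} (\<lambda>_. D)) (Th \<Otimes>\<^sub>M D)"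
      using that I2 rm by (intro measurable_Pair measurable_compose[OF rm estm]) auto
    from measurable_compose[OF this lm] show ?thesis by simp
  qed
  have term_m2: "(\<lambda>s. l thstar (s i)) \<in> borel_measurable (PiM {..<n} (\<lambda>_. D))"
    if "i \<in> I2" for i
  proof -
    have "(\<lambda>s. (thstar, s i)) \<in> measurable (PiM {..<n} (\<lambda>_. D)) (Th \<Otimes>\<^sub>M D)"
      using that I2 thstar by (intro measurable_Pair) auto
    from measurable_compose[OF this lm] show ?thesis by simp
  qed
  have hm: "h \<in> borel_measurable (PiM {..<n} (\<lambda>_. D))"
    unfolding h_def using term_m term_m2 by measurable
  have "(\<integral>\<^sup>+ s. ennreal (h s) \<partial>PiM {..<n} (\<lambda>_. D))
      = (\<integral>\<^sup>+ x. (\<integral>\<^sup>+ y. ennreal (h (merge I1 I2 (x, y))) \<partial>PiM I2 (\<lambda>_. D)) \<partial>PiM I1 (\<lambda>_. D))"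
    using P.product_nn_integral_fold[OF disj fin1 fin2, of "\<lambda>s. ennreal (h s)"] hm un by simp
  also have "\<dots> \<le> (\<integral>\<^sup>+ x. 1 \<partial>PiM I1 (\<lambda>_. D))"
  proof (rule nn_integral_mono)
    fix x assume x: "x \<in> space (PiM I1 (\<lambda>_. D))"
    have thx: "est x \<in> space Th" using measurable_space[OF estm x] .
    let ?g = "\<lambda>i z. ennreal (exp (- w * (l (est x) z - l thstar z)))"
    have gm: "?g i \<in> borel_measurable D" for i
    proof -
      have a: "(\<lambda>z. (est x, z)) \<in> measurable D (Th \<Otimes>\<^sub>M D)" using thx by measurable
      have b: "(\<lambda>z. (thstar, z)) \<in> measurable D (Th \<Otimes>\<^sub>M D)" using thstar by measurable
      have c: "l (est x) \<in> borel_measurable D" using measurable_compose[OF a lm] by simp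
      have d: "l thstar \<in> borel_measurable D" using measurable_compose[OF b lm] by simp
      from c d show ?thesis by measurable
    qed
    have "(\<integral>\<^sup>+ y. ennreal (h (merge I1 I2 (x, y))) \<partial>PiM I2 (\<lambda>_. D))
        = (\<integral>\<^sup>+ y. (\<Prod>i\<in>I2. ?g i (y i)) \<partial>PiM I2 (\<lambda>_. D))"
    proof (rule nn_integral_cong)
      fix y assume y: "y \<in> space (PiM I2 (\<lambda>_. D))"
      have r: "restrict (merge I1 I2 (x, y)) I1 = x"
        using x by (auto simp: merge_def restrict_def space_PiM extensional_def PiE_def fun_eq_iff)
      have m: "merge I1 I2 (x, y) i = y i" if "i \<in> I2" for i
        using that disj by (auto simp: merge_def)
      show "ennreal (h (merge I1 I2 (x, y))) = (\<Prod>i\<in>I2. ?g i (y i))"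
        unfolding h_def r using m by (simp add: prod_ennreal)
    qed
    also have "\<dots> = (\<Prod>i\<in>I2. \<integral>\<^sup>+ z. ?g i z \<partial>D)"
      using P.product_nn_integral_prod[OF fin2, of ?g] gm by simp
    also have "\<dots> \<le> 1"
    proof (rule prod_le_1)
      fix i assume "i \<in> I2"
      show "0 \<le> (\<integral>\<^sup>+ z. ?g i z \<partial>D) \<and> (\<integral>\<^sup>+ z. ?g i z \<partial>D) \<le> 1"
        using central thx w by (simp add: strong_central_def)
    qed
    finally show "(\<integral>\<^sup>+ y. ennreal (h (merge I1 I2 (x, y))) \<partial>PiM I2 (\<lambda>_. D)) \<le> 1" .
  qed
  also have "\<dots> = 1"
  proof -
    interpret Q: prob_space "PiM I1 (\<lambda>_. D)" by (rule prob_space_PiM) (rule D)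
    show ?thesis by (simp add: Q.emeasure_space_1)
  qed
  finally have int: "(\<integral>\<^sup>+ s. ennreal (h s) \<partial>PiM {..<n} (\<lambda>_. D)) \<le> 1" .
  show ?thesis
    unfolding e_value_def eq using hm int by (simp add: h_def prod_nonneg)
qed

end
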